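(* For any integer $\delta$ and any bipartition $\lambda$, $\delta$ equals the number of vertices labelled $\times$ minus the number of vertices labelled $\bigcirc$ in the weight diagram $x_\lambda(\delta)$.
   Context: A partition is a weakly decreasing sequence $\alpha=(\alpha_1,\alpha_2,\dots)$ of nonnegative integers, almost all zero. A bipartition is a pair $\lambda=(\lambda^\bullet,\lambda^\circ)$ of partitions. Set $I_\wedge(\lambda)=\{\lambda^\bullet_i-(i-1): i\ge1\}$ and $I_\vee(\lambda,\delta)=\{i-\delta-\lambda^\circ_i: i\ge1\}$. The weight diagram $x_\lambda(\delta)$ labels each integer $j$ by: - $\bigcirc$ if $j\notin I_\wedge(\lambda)\cup I_\vee(\lambda,\delta)$; - $\wedge$ if $j\in I_\wedge(\lambda)\setminus I_\vee(\lambda,\delta)$; - $\vee$ if $j\in I_\vee(\lambda,\delta)\setminus I_\wedge(\lambda)$; - $\times$ if $j\in I_\wedge(\lambda)\cap I_\vee(\lambda,\delta)$. (Only finitely many vertices are labelled $\times$ or $\bigcirc$.) *)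

theory Defs
  imports Main
begin

text \<open>A partition is encoded as a function a :: nat => nat with a k = alpha_(k+1)
  (0-based indexing of the parts). It must be weakly decreasing and almost all zero.\<close>
definition is_partition :: "(nat \<Rightarrow> nat) \<Rightarrow> bool" where
  "is_partition a \<longleftrightarrow> (\<forall>k. a (Suc k) \<le> a k) \<and> finite {k. a k \<noteq> 0}"

definition is_bipartition :: "(nat \<Rightarrow> nat) \<times> (nat \<Rightarrow> nat) \<Rightarrow> bool" where
  "is_bipartition lam \<longleftrightarrow> is_partition (fst lam) \<and> is_partition (snd lam)"

text \<open>I_wedge(lambda) = {lambda_bullet_i - (i-1) : i >= 1}; with i = k+1.\<close>
definition I_wedge :: "(nat \<Rightarrow> nat) \<times> (nat \<Rightarrow> nat) \<Rightarrow> int set" where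
  "I_wedge lam = {int (fst lam k) - int k | k. True}"

text \<open>I_vee(lambda, delta) = {i - delta - lambda_circ_i : i >= 1}; with i = k+1.\<close>
definition I_vee :: "(nat \<Rightarrow> nat) \<times> (nat \<Rightarrow> nat) \<Rightarrow> int \<Rightarrow> int set" where
  "I_vee lam \<delta> = {int k + 1 - \<delta> - int (snd lam k) | k. True}"

datatype label = Circ | Up | Down | Cross

definition weight_diagram :: "(nat \<Rightarrow> nat) \<times> (nat \<Rightarrow> nat) \<Rightarrow> int \<Rightarrow> int \<Rightarrow> label" where
  "weight_diagram lam \<delta> j =
     (if j \<in> I_wedge lam \<and> j \<in> I_vee lam \<delta> then Cross
      else if j \<in> I_wedge lam then Up
      else if j \<in> I_vee lam \<delta> then Down
      else Circ)"

end

theory Submission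
  imports Defs
begin

lemma anti_le:
  fixes a :: "nat \<Rightarrow> nat"
  assumes "\<forall>k. a (Suc k) \<le> a k" "k \<le> k'"
  shows "a k' \<le> a k"
  using assms(2) by (induction rule: dec_induct) (use assms(1) le_trans in blast)+

lemma W_card:
  fixes a :: "nat \<Rightarrow> nat" and L N :: nat
  assumes mono: "\<forall>k. a (Suc k) \<le> a k" and N: "\<forall>k\<ge>N. a k = 0"
    and LN: "N \<le> L" and La: "a 0 \<le> L"
  shows "card ({int (a k) - int k | k. True} \<inter> {- int L .. int L}) = L + 1"
proof -
  have eq: "{int (a k) - int k | k. True} \<inter> {- int L .. int L} = (\<lambda>k. int (a k) - int k) ` {0..L}"
  proof (intro set_eqI iffI)
    fix x assume "x \<in> {int (a k) - int k | k. True} \<inter> {- int L .. int L}"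
    then obtain k where x: "x = int (a k) - int k" "- int L \<le> x" by auto
    have "k \<le> L"
    proof (rule ccontr)
      assume "\<not> k \<le> L" then have "a k = 0" using N LN by auto
      then show False using x \<open>\<not> k \<le> L\<close> by auto
    qed
    then show "x \<in> (\<lambda>k. int (a k) - int k) ` {0..L}" using x by auto
  next
    fix x assume "x \<in> (\<lambda>k. int (a k) - int k) ` {0..L}"
    then obtain k where x: "x = int (a k) - int k" "k \<le> L" by auto
    have "a k \<le> a 0" using anti_le[OF mono, of 0 k] by simp
    then show "x \<in> {int (a k) - int k | k. True} \<inter> {- int L .. int L}" using x La by auto
  qed
  have inj: "inj_on (\<lambda>k. int (a k) - int k) {0..L}"
  proof (rule inj_onI)
    fix k k' assume h: "int (a k) - int k = int (a k') - int k'"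
    show "k = k'"
    proof (rule ccontr)
      assume "k \<noteq> k'"
      then consider "k < k'" | "k' < k" by linarith
      then show False
      proof cases
        case 1 then show ?thesis using anti_le[OF mono, of k k'] h by auto
      next
        case 2 then show ?thesis using anti_le[OF mono, of k' k] h by auto
      qed
    qed
  qed
  show ?thesis unfolding eq using card_image[OF inj] by simp
qed

lemma V_card:
  fixes b :: "nat \<Rightarrow> nat" and L M :: nat and \<delta> :: int
  assumes mono: "\<forall>k. b (Suc k) \<le> b k" and M: "\<forall>k\<ge>M. b k = 0"
    and LM: "int M + \<bar>\<delta>\<bar> \<le> int L" and Lb: "int (b 0) + \<bar>\<delta>\<bar> \<le> int L"
  shows "card ({int k + 1 - \<delta> - int (b k) | k. True} \<inter> {- int L .. int L}) = nat (int L + \<delta>)"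
proof -
  have eq: "{int k + 1 - \<delta> - int (b k) | k. True} \<inter> {- int L .. int L}
      = (\<lambda>k. int k + 1 - \<delta> - int (b k)) ` {0..<nat (int L + \<delta>)}"
  proof (intro set_eqI iffI)
    fix x assume "x \<in> {int k + 1 - \<delta> - int (b k) | k. True} \<inter> {- int L .. int L}"
    then obtain k where x: "x = int k + 1 - \<delta> - int (b k)" "x \<le> int L" by auto
    have "int k < int L + \<delta>"
    proof (rule ccontr)
      assume a: "\<not> int k < int L + \<delta>"
      then have "k \<ge> M" using LM by auto
      then have "b k = 0" using M by auto
      then show False using x a by auto
    qed
    then show "x \<in> (\<lambda>k. int k + 1 - \<delta> - int (b k)) ` {0..<nat (int L + \<delta>)}" using x by auto
  next
    fix x assume "x \<in> (\<lambda>k. int k + 1 - \<delta> - int (b k)) ` {0..<nat (int L + \<delta>)}"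
    then obtain k where x: "x = int k + 1 - \<delta> - int (b k)" "int k < int L + \<delta>" by auto
    have b0: "b k \<le> b 0" using anti_le[OF mono, of 0 k] by simp
    have "x \<le> int L"
    proof (cases "k \<ge> M")
      case True then show ?thesis using M x by auto
    next
      case False then show ?thesis using x LM by auto
    qed
    moreover have "- int L \<le> x" using x b0 Lb by auto
    ultimately show "x \<in> {int k + 1 - \<delta> - int (b k) | k. True} \<inter> {- int L .. int L}"
      using x by auto
  qed
  have inj: "inj_on (\<lambda>k. int k + 1 - \<delta> - int (b k)) {0..<nat (int L + \<delta>)}"
  proof (rule inj_onI)
    fix k k' assume h: "int k + 1 - \<delta> - int (b k) = int k' + 1 - \<delta> - int (b k')"
    show "k = k'"
    proof (rule ccontr)
      assume "k \<noteq> k'"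
      then consider "k < k'" | "k' < k" by linarith
      then show False
      proof cases
        case 1 then show ?thesis using anti_le[OF mono, of k k'] h by auto
      next
        case 2 then show ?thesis using anti_le[OF mono, of k' k] h by auto
      qed
    qed
  qed
  show ?thesis unfolding eq using card_image[OF inj] by simp
qed

lemma bound_zero:
  fixes a :: "nat \<Rightarrow> nat"
  assumes "finite {k. a k \<noteq> 0}"
  obtains N where "\<forall>k\<ge>N. a k = 0"
proof -
  obtain N where "\<forall>k\<in>{k. a k \<noteq> 0}. k < N" using assms finite_nat_set_iff_bounded by blast
  then have "\<forall>k\<ge>N. a k = 0" by auto
  then show ?thesis using that by blast
qed

theorem corollary2p2:
  fixes \<delta> :: int and lam :: "(nat \<Rightarrow> nat) \<times> (nat \<Rightarrow> nat)"
  assumes "is_bipartition lam"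
  shows "\<delta> = int (card {j. weight_diagram lam \<delta> j = Cross})
             - int (card {j. weight_diagram lam \<delta> j = Circ})"
proof -
  obtain a b where lam: "lam = (a, b)" by (cases lam)
  have ma: "\<forall>k. a (Suc k) \<le> a k" and fa: "finite {k. a k \<noteq> 0}"
   and mb: "\<forall>k. b (Suc k) \<le> b k" and fb: "finite {k. b k \<noteq> 0}"
    using assms unfolding is_bipartition_def is_partition_def lam by auto
  obtain N where N: "\<forall>k\<ge>N. a k = 0" using bound_zero[OF fa] by blast
  obtain M where M: "\<forall>k\<ge>M. b k = 0" using bound_zero[OF fb] by blast
  define W where "W = {int (a k) - int k | k. True}"
  define V where "V = {int k + 1 - \<delta> - int (b k) | k. True}"
  define L where "L = N + M + a 0 + b 0 + nat \<bar>\<delta>\<bar> + 1"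
  define X where "X = {- int L .. int L}"
  have wd: "weight_diagram lam \<delta> j = Cross \<longleftrightarrow> j \<in> W \<inter> V"
    "weight_diagram lam \<delta> j = Circ \<longleftrightarrow> j \<notin> W \<union> V" for j
    unfolding weight_diagram_def W_def V_def I_wedge_def I_vee_def lam by auto
  have Wb: "j \<in> W \<Longrightarrow> j \<le> int (a 0)" for j
  proof -
    assume "j \<in> W" then obtain k where "j = int (a k) - int k" unfolding W_def by blast
    then show ?thesis using anti_le[OF ma, of 0 k] by simp
  qed
  have Vb: "j \<in> V \<Longrightarrow> j \<ge> 1 - \<delta> - int (b 0)" for j
  proof -
    assume "j \<in> V" then obtain k where "j = int k + 1 - \<delta> - int (b k)" unfolding V_def by blast
    then show ?thesis using anti_le[OF mb, of 0 k] by simp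
  qed
  have Wl: "j \<le> - int N \<Longrightarrow> j \<in> W" for j
  proof -
    assume j: "j \<le> - int N"
    have "a (nat (-j)) = 0" using N j by auto
    then have "j = int (a (nat (-j))) - int (nat (-j))" using j by auto
    then show "j \<in> W" unfolding W_def by blast
  qed
  have Vl: "j \<ge> int M + 1 - \<delta> \<Longrightarrow> j \<in> V" for j
  proof -
    assume j: "j \<ge> int M + 1 - \<delta>"
    have "b (nat (j - 1 + \<delta>)) = 0" using M j by auto
    then have "j = int (nat (j - 1 + \<delta>)) + 1 - \<delta> - int (b (nat (j - 1 + \<delta>)))" using j by auto
    then show "j \<in> V" unfolding V_def by blast
  qed
  have C1: "{j. weight_diagram lam \<delta> j = Cross} = W \<inter> V \<inter> X"
    using Wb Vb unfolding wd X_def L_def by force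
  have C2: "{j. weight_diagram lam \<delta> j = Circ} = X - (W \<union> V)"
  proof -
    have "j \<notin> W \<union> V \<Longrightarrow> j \<in> X" for j
    proof -
      assume "j \<notin> W \<union> V"
      then have "j > - int N" "j < int M + 1 - \<delta>" using Wl Vl by force+
      then show "j \<in> X" unfolding X_def L_def by auto
    qed
    then show ?thesis using wd by auto
  qed
  have fX: "finite X" unfolding X_def by simp
  have cW: "card (W \<inter> X) = L + 1"
    unfolding W_def X_def by (rule W_card[OF ma N]) (auto simp: L_def)
  have cV: "card (V \<inter> X) = nat (int L + \<delta>)"
    unfolding V_def X_def by (rule V_card[OF mb M]) (auto simp: L_def)
  have cX: "card X = 2 * L + 1" unfolding X_def by simp
  have u1: "card ((W \<inter> X) \<union> (V \<inter> X)) + card ((W \<inter> X) \<inter> (V \<inter> X)) = card (W \<inter> X) + card (V \<inter> X)"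
    using card_Un_Int[of "W \<inter> X" "V \<inter> X"] fX by simp
  have u2: "card X = card ((W \<union> V) \<inter> X) + card (X - (W \<union> V))"
  proof -
    have "X = ((W \<union> V) \<inter> X) \<union> (X - (W \<union> V))" by auto
    then show ?thesis using card_Un_disjoint[of "(W \<union> V) \<inter> X" "X - (W \<union> V)"] fX
      by (metis Diff_disjoint Int_Diff Int_commute finite_Diff finite_Int)
  qed
  have e1: "(W \<inter> X) \<union> (V \<inter> X) = (W \<union> V) \<inter> X" "(W \<inter> X) \<inter> (V \<inter> X) = W \<inter> V \<inter> X" by auto
  have "int L + \<delta> \<ge> 0" unfolding L_def by auto
  then show ?thesis unfolding C1 C2 using u1 u2 cW cV cX e1 by simp
qed

end
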